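(* $\left\|\begin{bmatrix}1&1&1&1\\0&1&0&0\\0&0&1&0\\0&0&0&1\end{bmatrix}\right\|_\bullet>\left\|\begin{bmatrix}1&1&0\\1&1&1\\0&1&0\end{bmatrix}\right\|_\bullet$.
   Context: Fix $\mathbb F\in\{\mathbb R,\mathbb C\}$. For an $m\times n$ matrix $A$, the Schur norm is $\|A\|_\bullet=\sup\{\|A\bullet X\|: X\in M_{m,n}(\mathbb F),\ \|X\|\le1\}$, where $A\bullet X=[a_{ij}x_{ij}]$ is the entrywise product and $\|\cdot\|$ is the operator norm $\ell^2_n\to\ell^2_m$. *)

theory Defs
  imports "HOL-Analysis.Analysis"
begin

text \<open>Operator norm of an m x n matrix as a map from l2^n to l2^m
  (the norm on 'a^'n is the Euclidean/l2 norm).\<close>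
definition mat_opnorm :: "'a::{real_normed_field}^'n^'m \<Rightarrow> real" where
  "mat_opnorm A = onorm (\<lambda>x. A *v x)"

definition schur_prod :: "'a::times^'n^'m \<Rightarrow> 'a^'n^'m \<Rightarrow> 'a^'n^'m" where
  "schur_prod A X = (\<chi> i j. A $ i $ j * X $ i $ j)"

definition schur_norm :: "'a::{real_normed_field}^'n^'m \<Rightarrow> real" where
  "schur_norm A = Sup {mat_opnorm (schur_prod A X) | X. mat_opnorm X \<le> 1}"

definition M4 :: "'a::{real_normed_field}^4^4" where
  "M4 = (\<chi> i j. if i = 0 \<or> i = j then 1 else 0)"

definition M3 :: "'a::{real_normed_field}^3^3" where
  "M3 = (\<chi> i j. if (i = 0 \<and> j \<noteq> 2) \<or> i = 1 \<or> (i = 2 \<and> j = 1) then 1 else 0)"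

end

theory Submission
  imports Defs
begin


lemma norm_vec_sq: "(norm (x::'a::real_normed_vector^'n))^2 = (\<Sum>i\<in>UNIV. (norm (x$i))^2)"
  by (simp add: norm_vec_def L2_set_def sum_nonneg)

lemma mat_opnorm_bound:
  fixes X :: "'a::{real_normed_field,euclidean_space}^'n^'m"
  shows "norm (X *v y) \<le> mat_opnorm X * norm y"
  unfolding mat_opnorm_def by (rule onorm) simp

lemma schur_fact:
  fixes A X :: "'a::{real_normed_field,euclidean_space}^'n^'m"
    and r :: "'m \<Rightarrow> 'k::finite \<Rightarrow> real" and c :: "'n \<Rightarrow> 'k \<Rightarrow> real"
  assumes A: "\<And>i j. A$i$j = of_real (\<Sum>k\<in>UNIV. r i k * c j k)"
  and R: "\<And>i. (\<Sum>k\<in>UNIV. (r i k)^2) \<le> R2" and C: "\<And>j. (\<Sum>k\<in>UNIV. (c j k)^2) \<le> C2"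
  shows "norm (schur_prod A X *v y) \<le> sqrt (R2*C2) * mat_opnorm X * norm y"
proof -
  define w where "w k = (\<chi> j. c j k *\<^sub>R y$j)" for k
  have comp: "(schur_prod A X *v y)$i = (\<Sum>k\<in>UNIV. r i k *\<^sub>R (X *v w k)$i)" for i
  proof -
    have "(schur_prod A X *v y)$i = (\<Sum>j\<in>UNIV. \<Sum>k\<in>UNIV. of_real (r i k * c j k) * X$i$j * y$j)"
      by (simp add: matrix_vector_mult_def schur_prod_def A sum_distrib_right)
    also have "\<dots> = (\<Sum>k\<in>UNIV. \<Sum>j\<in>UNIV. of_real (r i k * c j k) * X$i$j * y$j)"
      by (rule sum.swap)
    also have "\<dots> = (\<Sum>k\<in>UNIV. r i k *\<^sub>R (X *v w k)$i)"
      by (simp add: matrix_vector_mult_def w_def scaleR_sum_right scaleR_conv_of_real sum_distrib_left mult_ac)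
    finally show ?thesis .
  qed
  have R2: "0 \<le> R2" using R[of undefined] by (meson order_trans sum_nonneg zero_le_power2)
  have C2: "0 \<le> C2" using C[of undefined] by (meson order_trans sum_nonneg zero_le_power2)
  have ci: "(norm ((schur_prod A X *v y)$i))^2 \<le> R2 * (\<Sum>k\<in>UNIV. (norm ((X *v w k)$i))^2)" for i
  proof -
    have "norm ((schur_prod A X *v y)$i) \<le> (\<Sum>k\<in>UNIV. \<bar>r i k\<bar> * \<bar>norm ((X *v w k)$i)\<bar>)"
      unfolding comp by (rule order_trans[OF norm_sum]) simp
    also have "\<dots> \<le> L2_set (r i) UNIV * L2_set (\<lambda>k. norm ((X *v w k)$i)) UNIV"
      by (rule L2_set_mult_ineq)
    finally have "(norm ((schur_prod A X *v y)$i))^2 \<le> (L2_set (r i) UNIV * L2_set (\<lambda>k. norm ((X *v w k)$i)) UNIV)^2"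
      by (simp add: power_mono)
    also have "\<dots> = (\<Sum>k\<in>UNIV. (r i k)^2) * (\<Sum>k\<in>UNIV. (norm ((X *v w k)$i))^2)"
      by (simp add: L2_set_def power_mult_distrib sum_nonneg)
    also have "\<dots> \<le> R2 * (\<Sum>k\<in>UNIV. (norm ((X *v w k)$i))^2)"
      by (rule mult_right_mono[OF R]) (simp add: sum_nonneg)
    finally show ?thesis .
  qed
  have "(norm (schur_prod A X *v y))^2 \<le> (\<Sum>i\<in>UNIV. R2 * (\<Sum>k\<in>UNIV. (norm ((X *v w k)$i))^2))"
    unfolding norm_vec_sq by (rule sum_mono[OF ci])
  also have "\<dots> = R2 * (\<Sum>k\<in>UNIV. \<Sum>i\<in>UNIV. (norm ((X *v w k)$i))^2)"
    by (subst sum.swap) (simp add: sum_distrib_left)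
  also have "\<dots> = R2 * (\<Sum>k\<in>UNIV. (norm (X *v w k))^2)"
    by (simp only: norm_vec_sq)
  also have "\<dots> \<le> R2 * (\<Sum>k\<in>UNIV. (mat_opnorm X)^2 * (norm (w k))^2)"
  proof (rule mult_left_mono[OF sum_mono R2])
    fix k
    show "(norm (X *v w k))^2 \<le> (mat_opnorm X)^2 * (norm (w k))^2"
      using mat_opnorm_bound[of X "w k"] by (metis norm_ge_zero power_mono power_mult_distrib)
  qed
  also have "\<dots> = R2 * (mat_opnorm X)^2 * (\<Sum>k\<in>UNIV. \<Sum>j\<in>UNIV. (c j k)^2 * (norm (y$j))^2)"
    by (simp add: w_def norm_vec_sq power_mult_distrib sum_distrib_left mult_ac)
  also have "\<dots> = R2 * (mat_opnorm X)^2 * (\<Sum>j\<in>UNIV. (norm (y$j))^2 * (\<Sum>k\<in>UNIV. (c j k)^2))"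
    by (subst sum.swap) (simp add: sum_distrib_left mult_ac)
  also have "\<dots> \<le> R2 * (mat_opnorm X)^2 * (\<Sum>j\<in>UNIV. (norm (y$j))^2 * C2)"
    by (intro mult_left_mono sum_mono mult_left_mono C) (use R2 in auto)
  also have "\<dots> = (sqrt (R2*C2) * mat_opnorm X * norm y)^2"
    using R2 C2 by (simp add: norm_vec_sq power_mult_distrib sum_distrib_left sum_distrib_right mult_ac)
  finally show ?thesis
    using R2 C2 by (metis power2_le_imp_le mat_opnorm_def onorm_pos_le matrix_vector_mul_bounded_linear
        mult_nonneg_nonneg norm_ge_zero real_sqrt_ge_zero)
qed

lemma schur_norm_le:
  fixes A :: "'a::{real_normed_field,euclidean_space}^'n^'m"
  assumes K: "0 \<le> K" and H: "\<And>X. mat_opnorm (schur_prod A X) \<le> K * mat_opnorm X"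
  shows "schur_norm A \<le> K" and "bdd_above {mat_opnorm (schur_prod A X) | X. mat_opnorm X \<le> 1}"
proof -
  have le: "y \<le> K" if "y \<in> {mat_opnorm (schur_prod A X) | X. mat_opnorm X \<le> 1}" for y
  proof -
    from that obtain X where y: "y = mat_opnorm (schur_prod A X)" and X: "mat_opnorm X \<le> 1" by blast
    have "y \<le> K * mat_opnorm X" using H y by simp
    also have "\<dots> \<le> K * 1" using X K by (intro mult_left_mono) auto
    finally show ?thesis by simp
  qed
  have ne: "{mat_opnorm (schur_prod A X) | X. mat_opnorm X \<le> 1} \<noteq> {}"
  proof -
    have "mat_opnorm (0::'a^'n^'m) = 0"
      proof -
      have "(\<lambda>x. (0::'a^'n^'m) *v x) = (\<lambda>x. 0)" by (rule ext) (simp add: vec_eq_iff matrix_vector_mult_def)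
      then show ?thesis unfolding mat_opnorm_def by (metis onorm_zero)
    qed
    then show ?thesis by (auto intro!: exI[of _ 0])
  qed
  show "schur_norm A \<le> K" unfolding schur_norm_def by (rule cSup_least[OF ne le])
  show "bdd_above {mat_opnorm (schur_prod A X) | X. mat_opnorm X \<le> 1}"
    using le by (auto simp: bdd_above_def)
qed

lemma schur_fact_opnorm:
  fixes A X :: "'a::{real_normed_field,euclidean_space}^'n^'m"
    and r :: "'m \<Rightarrow> 'k::finite \<Rightarrow> real" and c :: "'n \<Rightarrow> 'k \<Rightarrow> real"
  assumes A: "\<And>i j. A$i$j = of_real (\<Sum>k\<in>UNIV. r i k * c j k)"
  and R: "\<And>i. (\<Sum>k\<in>UNIV. (r i k)^2) \<le> R2" and C: "\<And>j. (\<Sum>k\<in>UNIV. (c j k)^2) \<le> C2"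
  shows "mat_opnorm (schur_prod A X) \<le> sqrt (R2*C2) * mat_opnorm X"
  unfolding mat_opnorm_def[of "schur_prod A X"]
  by (rule onorm_le) (use schur_fact[OF A R C] in \<open>simp add: mat_opnorm_def\<close>)

lemma schur_bdd:
  fixes A :: "'a::{real_normed_field,euclidean_space}^'n^'m"
  assumes A: "\<And>i j. A$i$j = of_real (a i j)"
  shows "bdd_above {mat_opnorm (schur_prod A X) | X. mat_opnorm X \<le> 1}"
proof (rule schur_norm_le(2))
  let ?C2 = "\<Sum>j\<in>UNIV. \<Sum>k\<in>UNIV. (a k j)^2"
  show "0 \<le> sqrt (1 * ?C2)" by (simp add: sum_nonneg)
  fix X :: "'a^'n^'m"
  show "mat_opnorm (schur_prod A X) \<le> sqrt (1 * ?C2) * mat_opnorm X"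
  proof (rule schur_fact_opnorm[where r="\<lambda>i k. if k = i then 1 else 0" and c="\<lambda>j k. a k j"])
    show "A $ i $ j = of_real (\<Sum>k\<in>UNIV. (if k = i then 1 else 0) * a k j)" for i j
    proof -
      have "(\<lambda>k. (if k = i then 1 else 0) * a k j) = (\<lambda>k. if k = i then a k j else 0)" by auto
      then show ?thesis by (subst (asm) fun_eq_iff) (simp add: A)
    qed
    show "(\<Sum>k\<in>UNIV. (if k = i then 1 else 0 :: real)^2) \<le> 1" for i :: 'm
    proof -
      have e: "(\<lambda>k. (if k = i then 1 else 0 :: real)^2) = (\<lambda>k. if k = i then 1 else 0)" by auto
      show ?thesis by (subst e) (simp add: sum.delta)
    qed
    show "(\<Sum>k\<in>UNIV. (a k j)^2) \<le> ?C2" for j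
      by (rule member_le_sum) (auto intro: sum_nonneg)
  qed
qed



definition vv :: "4 \<Rightarrow> real" where "vv i = (if i = 0 then 3 else 1)"

definition X0 :: "'a::{real_normed_field,euclidean_space}^4^4" where
  "X0 = (\<chi> i j. of_real ((if i = j then 1 else 0) - vv i * vv j / 6))"

lemma vv_sq: "(\<Sum>i\<in>UNIV. (vv i / 6)^2) = 1/3"
  by (simp add: sum_4 vv_def power_divide)

lemma X0_apply: "(X0 *v x) $ i = x$i - (vv i / 6) *\<^sub>R (\<Sum>j\<in>UNIV. vv j *\<^sub>R x$j)"
  for x :: "'a::{real_normed_field,euclidean_space}^4"
proof -
  have "(X0 *v x) $ i = (\<Sum>j\<in>UNIV. (if i = j then x$j else 0) - (vv i / 6) *\<^sub>R (vv j *\<^sub>R x$j))"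
    unfolding matrix_vector_mult_def X0_def vec_lambda_beta
    by (intro sum.cong refl) (auto simp: of_real_diff left_diff_distrib scaleR_conv_of_real)
  also have "\<dots> = x$i - (vv i / 6) *\<^sub>R (\<Sum>j\<in>UNIV. vv j *\<^sub>R x$j)"
    by (simp add: sum_subtractf scaleR_sum_right)
  finally show ?thesis .
qed

lemma norm_diff_scaleR_sq:
  fixes a s :: "'a::real_inner"
  shows "(norm (a - t *\<^sub>R s))^2 = (norm a)^2 - 2*t*inner a s + t^2 * (norm s)^2"
proof -
  have "(norm (a - t *\<^sub>R s))^2 = inner (a - t *\<^sub>R s) (a - t *\<^sub>R s)" by (rule power2_norm_eq_inner)
  also have "\<dots> = inner a a - t * inner a s - t * inner s a + t * t * inner s s"
    by (simp add: inner_diff_left inner_diff_right algebra_simps)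
  also have "\<dots> = (norm a)^2 - 2*t*inner a s + t^2 * (norm s)^2"
    by (simp only: power2_norm_eq_inner inner_commute[of s a]) (simp add: power2_eq_square)
  finally show ?thesis .
qed

lemma X0_norm: "norm (X0 *v x) = norm x"
  for x :: "'a::{real_normed_field,euclidean_space}^4"
proof -
  define s where "s = (\<Sum>j\<in>UNIV. vv j *\<^sub>R x$j)"
  have "(norm (X0 *v x))^2 = (\<Sum>i\<in>UNIV. (norm (x$i - (vv i / 6) *\<^sub>R s))^2)"
    by (simp add: norm_vec_def L2_set_def sum_nonneg X0_apply s_def)
  also have "\<dots> = (\<Sum>i\<in>UNIV. (norm (x$i))^2 - 2 * (vv i / 6) * inner (x$i) s + (vv i / 6)^2 * (norm s)^2)"
    by (simp only: norm_diff_scaleR_sq)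
  also have "\<dots> = (\<Sum>i\<in>UNIV. (norm (x$i))^2) - (\<Sum>i\<in>UNIV. 2 * (vv i / 6) * inner (x$i) s)
       + (\<Sum>i\<in>UNIV. (vv i / 6)^2 * (norm s)^2)"
    by (simp only: sum.distrib sum_subtractf)
  also have "(\<Sum>i\<in>UNIV. 2 * (vv i / 6) * inner (x$i) s) = (1/3) * inner s s"
  proof -
    have "(\<Sum>i\<in>UNIV. 2 * (vv i / 6) * inner (x$i) s) = (1/3) * (\<Sum>i\<in>UNIV. vv i * inner (x$i) s)"
      by (simp add: sum_distrib_left)
    also have "(\<Sum>i\<in>UNIV. vv i * inner (x$i) s) = inner s s"
      by (simp add: s_def inner_sum_left)
    finally show ?thesis .
  qed
  also have "(\<Sum>i\<in>UNIV. (vv i / 6)^2 * (norm s)^2) = (1/3) * inner s s"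
    by (simp add: sum_distrib_right[symmetric] vv_sq power2_norm_eq_inner)
  also have "(\<Sum>i\<in>UNIV. (norm (x$i))^2) - 1 / 3 * inner s s + 1 / 3 * inner s s = (norm x)^2"
    by (simp add: norm_vec_def L2_set_def sum_nonneg)
  finally show ?thesis by (simp add: power2_eq_iff_nonneg)
qed



definition tri :: "real \<Rightarrow> real \<Rightarrow> real \<Rightarrow> 3 \<Rightarrow> real" where
  "tri a b c k = (if k = 0 then a else if k = 1 then b else c)"

definition rr :: "3 \<Rightarrow> 3 \<Rightarrow> real" where
  "rr i k = (if i = 0 then tri 35 1099 (-560) k else if i = 1 then tri 990 723 (-135) k
     else tri 400 (-4) (-1165) k) / 36645"

definition cc :: "3 \<Rightarrow> 3 \<Rightarrow> real" where
  "cc j k = (if j = 0 then tri 12 35 4 k else if j = 1 then tri 19 20 (-25) k else tri 35 5 12 k)"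

lemma cases3: "(i::3) = 0 \<or> i = 1 \<or> i = 2"
  using exhaust_3[of i] by auto

lemma cases4: "(i::4) = 0 \<or> i = 1 \<or> i = 2 \<or> i = 3"
  using exhaust_4[of i] by auto

lemma U3: "(UNIV::3 set) = {0,1,2}" using cases3 by auto
lemma U4: "(UNIV::4 set) = {0,1,2,3}" using cases4 by auto

lemma sum3': "sum f (UNIV::3 set) = f 0 + f 1 + f 2"
  unfolding U3 by (simp add: ac_simps)

lemma sum4': "sum f (UNIV::4 set) = f 0 + f 1 + f 2 + f 3"
  unfolding U4 by (simp add: ac_simps)

lemma M3_fact: "(M3 :: 'a::{real_normed_field,euclidean_space}^3^3)$i$j = of_real (\<Sum>k\<in>UNIV. rr i k * cc j k)"
  using cases3[of i] cases3[of j]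
  by (auto simp: M3_def sum3' rr_def cc_def tri_def)

lemma rr_bound: "(\<Sum>k\<in>UNIV. (rr i k)^2) \<le> 1522626 / 36645^2"
  using cases3[of i] by (auto simp: sum3' rr_def tri_def power_divide)

lemma cc_bound: "(\<Sum>k\<in>UNIV. (cc j k)^2) \<le> 1394"
  using cases3[of j] by (auto simp: sum3' cc_def tri_def)

lemma M3_le: "schur_norm (M3 :: 'a::{real_normed_field,euclidean_space}^3^3) \<le> sqrt (1522626 / 36645^2 * 1394)"
proof (rule schur_norm_le(1))
  show "0 \<le> sqrt (1522626 / 36645^2 * 1394)" by simp
  show "mat_opnorm (schur_prod (M3 :: 'a^3^3) X) \<le> sqrt (1522626 / 36645^2 * 1394) * mat_opnorm X" for X
    by (rule schur_fact_opnorm[OF M3_fact rr_bound cc_bound])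
qed

lemma X0_opnorm: "mat_opnorm (X0 :: 'a::{real_normed_field,euclidean_space}^4^4) \<le> 1"
  unfolding mat_opnorm_def by (rule onorm_le) (simp add: X0_norm)

lemma mv_of_real: "(\<chi> i j. (of_real (f i j) :: 'a::real_normed_field)) *v (\<chi> j. of_real (g j)) = (\<chi> i. of_real (\<Sum>j\<in>UNIV. f i j * g j))"
  by (simp add: matrix_vector_mult_def vec_eq_iff of_real_sum)

lemma schur_of_real: "schur_prod (\<chi> i j. (of_real (f i j) :: 'a::real_normed_field)) (\<chi> i j. of_real (g i j)) = (\<chi> i j. of_real (f i j * g i j))"
  by (simp add: schur_prod_def)

lemma norm_of_real_vec: "norm (\<chi> i. (of_real (h i) :: 'a::real_normed_field)) = sqrt (\<Sum>i\<in>UNIV. (h i)^2)"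
  by (simp add: norm_vec_def L2_set_def)

definition m4r :: "4 \<Rightarrow> 4 \<Rightarrow> real" where "m4r i j = (if i = 0 \<or> i = j then 1 else 0)"
definition x0r :: "4 \<Rightarrow> 4 \<Rightarrow> real" where "x0r i j = (if i = j then 1 else 0) - vv i * vv j / 6"
definition yr :: "4 \<Rightarrow> real" where "yr i = (if i = 0 then 4 else 7)"

lemma M4_alt: "(M4 :: 'a::real_normed_field^4^4) = (\<chi> i j. of_real (m4r i j))"
  by (simp add: M4_def m4r_def vec_eq_iff)

lemma X0_alt: "(X0 :: 'a::{real_normed_field,euclidean_space}^4^4) = (\<chi> i j. of_real (x0r i j))"
  by (simp add: X0_def x0r_def)

lemma By_real: "(\<Sum>j\<in>UNIV. m4r i j * x0r i j * yr j) = (if i = 0 then -25/2 else 35/6)"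
  using cases4[of i] by (auto simp: sum4' m4r_def x0r_def yr_def vv_def)

lemma M4_ge: "sqrt (775/3) / sqrt 163 \<le> schur_norm (M4 :: 'a::{real_normed_field,euclidean_space}^4^4)"
proof -
  let ?B = "schur_prod (M4::'a^4^4) X0"
  define y :: "'a^4" where "y = (\<chi> i. of_real (yr i))"
  have By: "?B *v y = (\<chi> i. of_real (if i = 0 then -25/2 else 35/6))"
    unfolding M4_alt X0_alt schur_of_real y_def mv_of_real By_real ..
  have ny: "norm y = sqrt 163"
    unfolding y_def norm_of_real_vec by (simp add: sum4' yr_def)
  have nBy: "norm (?B *v y) = sqrt (775/3)"
    unfolding By norm_of_real_vec by (simp add: sum4' power_divide)
  have "norm (?B *v y) \<le> mat_opnorm ?B * norm y" by (rule mat_opnorm_bound)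
  then have "sqrt (775/3) \<le> mat_opnorm ?B * sqrt 163" by (simp only: ny nBy)
  then have "sqrt (775/3) / sqrt 163 \<le> mat_opnorm ?B"
    by (simp add: divide_le_eq)
  also have "mat_opnorm ?B \<le> schur_norm (M4 :: 'a^4^4)"
    unfolding schur_norm_def
  proof (rule cSup_upper)
    show "mat_opnorm ?B \<in> {mat_opnorm (schur_prod (M4 :: 'a^4^4) X) | X. mat_opnorm X \<le> 1}"
      using X0_opnorm by blast
    show "bdd_above {mat_opnorm (schur_prod (M4 :: 'a^4^4) X) | X. mat_opnorm X \<le> 1}"
      by (rule schur_bdd[where a="m4r"]) (simp add: M4_alt)
  qed
  finally show ?thesis .
qed


lemma key_ineq: "sqrt (1522626 / 36645^2 * 1394) < sqrt (775/3) / sqrt 163"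
proof -
  have "sqrt (775/3) / sqrt 163 = sqrt (775/3/163)" by (simp only: real_sqrt_divide)
  moreover have "(1522626 / 36645^2 * 1394::real) < 775/3/163"
    by simp
  then have "sqrt (1522626 / 36645^2 * 1394) < sqrt (775/3/163)"
    by (simp only: real_sqrt_less_iff)
  ultimately show ?thesis by simp
qed
lemma main_gen: "schur_norm (M4 :: 'a::{real_normed_field,euclidean_space}^4^4) > schur_norm (M3 :: 'a^3^3)"
proof -
  have a: "schur_norm (M3 :: 'a^3^3) \<le> sqrt (1522626 / 36645^2 * 1394)" by (rule M3_le)
  have b: "sqrt (775/3) / sqrt 163 \<le> schur_norm (M4 :: 'a^4^4)" by (rule M4_ge)
  show ?thesis by (rule le_less_trans[OF a less_le_trans[OF key_ineq b]])
qed

theorem proposition5p4: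
  shows "schur_norm (M4 :: real^4^4) > schur_norm (M3 :: real^3^3) \<and>
         schur_norm (M4 :: complex^4^4) > schur_norm (M3 :: complex^3^3)"
  using main_gen[where 'a=real] main_gen[where 'a=complex] by blast

end
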